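(* Consider an instance with $n$ agents, $m$ indivisible items and binary additive valuations, and fix a stable allocation $\chi$ with profile $(h_1,\dots,h_n)$ (notation as in the context). For integers $d\ge 0$ define $p_d=\{i: h_i=d \text{ and } \chi \text{ admits a transfer } i\to j \text{ for some } j \text{ with } h_j=d-1\}$, $q_d=\{i: h_i=d \text{ and } \chi \text{ admits a transfer } k\to i \text{ for some } k \text{ with } h_k=d+1\}$, $r_d=\{i: h_i=d,\ i\notin p_d,\ i\notin q_d\}$, $s_d=p_d\cup q_{d-1}$ (with $q_{-1}=\emptyset$), and let $R_d=\bigcup_{i\in r_d}\chi_i$ and $S_d=\bigcup_{i\in s_d}\chi_i$. Then for every stable allocation $\chi'$ and every $d$, every item of $R_d$ is allocated under $\chi'$ to an agent in $r_d$, and every item of $S_d$ is allocated under $\chi'$ to an agent in $s_d$.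
   Context: Agents $[n]$, items $[m]$. Each agent $i$ has a set $L_i\subseteq[m]$ of liked items and valuation $v_i(S)=|S\cap L_i|$. An allocation $\chi=(\chi_1,\dots,\chi_n)$ is a tuple of pairwise disjoint subsets of $[m]$; it is clean if $\chi_i\subseteq L_i$ for all $i$, and max-USW if it maximizes $\sum_i v_i(\chi_i)$. Throughout, "allocation" means a clean max-USW allocation. Profile: $(h_1,\dots,h_n)$, $h_i=|\chi_i|$. Given $\chi$, form a directed graph on $[n]$ with an arc $(i,i')$, $i\ne i'$, whenever some $o\in\chi_i$ has $o\in L_{i'}$; $\chi$ admits a transfer $u\to v$ if there is a simple directed path from $u$ to $v$ with at least one arc. A transfer $u\to v$ is narrowing if $h_u\ge h_v+2$; $\chi$ is stable if it admits no narrowing transfer. *)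

theory Defs
  imports Main
begin

text \<open>Agents are 0..<n, items are 0..<m. L i is the set of items liked by agent i;
  v_i(S) = card (S \<inter> L i). An allocation is chi :: nat => nat set, chi i the bundle of agent i.\<close>

definition is_alloc :: "nat \<Rightarrow> nat \<Rightarrow> (nat \<Rightarrow> nat set) \<Rightarrow> bool" where
  "is_alloc n m chi \<longleftrightarrow> (\<forall>i<n. chi i \<subseteq> {..<m}) \<and>
     (\<forall>i<n. \<forall>j<n. i \<noteq> j \<longrightarrow> chi i \<inter> chi j = {})"

definition usw :: "nat \<Rightarrow> (nat \<Rightarrow> nat set) \<Rightarrow> (nat \<Rightarrow> nat set) \<Rightarrow> nat" where
  "usw n L chi = (\<Sum>i<n. card (chi i \<inter> L i))"

definition clean :: "nat \<Rightarrow> (nat \<Rightarrow> nat set) \<Rightarrow> (nat \<Rightarrow> nat set) \<Rightarrow> bool" where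
  "clean n L chi \<longleftrightarrow> (\<forall>i<n. chi i \<subseteq> L i)"

definition max_usw :: "nat \<Rightarrow> nat \<Rightarrow> (nat \<Rightarrow> nat set) \<Rightarrow> (nat \<Rightarrow> nat set) \<Rightarrow> bool" where
  "max_usw n m L chi \<longleftrightarrow> is_alloc n m chi \<and>
     (\<forall>chi'. is_alloc n m chi' \<longrightarrow> usw n L chi' \<le> usw n L chi)"

definition arc :: "nat \<Rightarrow> (nat \<Rightarrow> nat set) \<Rightarrow> (nat \<Rightarrow> nat set) \<Rightarrow> nat \<Rightarrow> nat \<Rightarrow> bool" where
  "arc n L chi i i' \<longleftrightarrow> i < n \<and> i' < n \<and> i \<noteq> i' \<and> (\<exists>x\<in>chi i. x \<in> L i')"

definition transfer :: "nat \<Rightarrow> (nat \<Rightarrow> nat set) \<Rightarrow> (nat \<Rightarrow> nat set) \<Rightarrow> nat \<Rightarrow> nat \<Rightarrow> bool" where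
  "transfer n L chi u v \<longleftrightarrow> (\<exists>xs. length xs \<ge> 2 \<and> hd xs = u \<and> last xs = v \<and> distinct xs \<and>
     (\<forall>k. Suc k < length xs \<longrightarrow> arc n L chi (xs ! k) (xs ! Suc k)))"

definition stable_alloc :: "nat \<Rightarrow> nat \<Rightarrow> (nat \<Rightarrow> nat set) \<Rightarrow> (nat \<Rightarrow> nat set) \<Rightarrow> bool" where
  "stable_alloc n m L chi \<longleftrightarrow> clean n L chi \<and> max_usw n m L chi \<and>
     \<not> (\<exists>u v. transfer n L chi u v \<and> card (chi u) \<ge> card (chi v) + 2)"

definition p_set :: "nat \<Rightarrow> (nat \<Rightarrow> nat set) \<Rightarrow> (nat \<Rightarrow> nat set) \<Rightarrow> nat \<Rightarrow> nat set" where
  "p_set n L chi d = {i. i < n \<and> card (chi i) = d \<and>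
     (\<exists>j<n. card (chi j) + 1 = d \<and> transfer n L chi i j)}"

definition q_set :: "nat \<Rightarrow> (nat \<Rightarrow> nat set) \<Rightarrow> (nat \<Rightarrow> nat set) \<Rightarrow> nat \<Rightarrow> nat set" where
  "q_set n L chi d = {i. i < n \<and> card (chi i) = d \<and>
     (\<exists>k<n. card (chi k) = d + 1 \<and> transfer n L chi k i)}"

definition r_set :: "nat \<Rightarrow> (nat \<Rightarrow> nat set) \<Rightarrow> (nat \<Rightarrow> nat set) \<Rightarrow> nat \<Rightarrow> nat set" where
  "r_set n L chi d = {i. i < n \<and> card (chi i) = d \<and> i \<notin> p_set n L chi d \<and> i \<notin> q_set n L chi d}"

definition s_set :: "nat \<Rightarrow> (nat \<Rightarrow> nat set) \<Rightarrow> (nat \<Rightarrow> nat set) \<Rightarrow> nat \<Rightarrow> nat set" where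
  "s_set n L chi d = p_set n L chi d \<union> (if d = 0 then {} else q_set n L chi (d - 1))"

definition R_items :: "nat \<Rightarrow> (nat \<Rightarrow> nat set) \<Rightarrow> (nat \<Rightarrow> nat set) \<Rightarrow> nat \<Rightarrow> nat set" where
  "R_items n L chi d = (\<Union>i\<in>r_set n L chi d. chi i)"

definition S_items :: "nat \<Rightarrow> (nat \<Rightarrow> nat set) \<Rightarrow> (nat \<Rightarrow> nat set) \<Rightarrow> nat \<Rightarrow> nat set" where
  "S_items n L chi d = (\<Union>i\<in>s_set n L chi d. chi i)"

end

theory Submission
  imports Defs "HOL-Library.Transitive_Closure_Table"
begin

lemma path_iff:
  "rtrancl_path r u ys v \<longleftrightarrow> last (u#ys) = v \<and>
     (\<forall>k. Suc k < length (u#ys) \<longrightarrow> r ((u#ys)!k) ((u#ys)!Suc k))"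
proof (induction ys arbitrary: u)
  case Nil
  then show ?case by (auto elim: rtrancl_path.cases intro: rtrancl_path.base)
next
  case (Cons y ys)
  have "rtrancl_path r u (y#ys) v \<longleftrightarrow> r u y \<and> rtrancl_path r y ys v"
    by (auto elim: rtrancl_path.cases intro: rtrancl_path.step)
  also have "\<dots> \<longleftrightarrow> last (u#y#ys) = v \<and>
     (\<forall>k. Suc k < length (u#y#ys) \<longrightarrow> r ((u#y#ys)!k) ((u#y#ys)!Suc k))"
  proof -
    have "(\<forall>k. Suc k < length (u#y#ys) \<longrightarrow> r ((u#y#ys)!k) ((u#y#ys)!Suc k)) \<longleftrightarrow>
       r u y \<and> (\<forall>k. Suc k < length (y#ys) \<longrightarrow> r ((y#ys)!k) ((y#ys)!Suc k))"
      (is "?A \<longleftrightarrow> ?B")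
    proof
      assume ?A
      then show ?B by (metis Suc_less_eq length_Cons nth_Cons_0 nth_Cons_Suc zero_less_Suc)
    next
      assume b: ?B
      show ?A
      proof (intro allI impI)
        fix k assume "Suc k < length (u#y#ys)"
        then show "r ((u#y#ys)!k) ((u#y#ys)!Suc k)"
          using b by (cases k) auto
      qed
    qed
    then show ?thesis using Cons.IH[of y] by auto
  qed
  finally show ?case .
qed

lemma transfer_iff:
  "transfer n L c u v \<longleftrightarrow> u \<noteq> v \<and> (\<exists>ys. rtrancl_path (arc n L c) u ys v)"
proof
  assume "transfer n L c u v"
  then obtain xs where xs: "length xs \<ge> 2" "hd xs = u" "last xs = v" "distinct xs"
    "\<forall>k. Suc k < length xs \<longrightarrow> arc n L c (xs ! k) (xs ! Suc k)"
    unfolding transfer_def by blast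
  then obtain ys where ys: "xs = u # ys" by (cases xs) auto
  with xs have "ys \<noteq> []" by auto
  with xs ys have "u \<noteq> v" by auto
  moreover have "rtrancl_path (arc n L c) u ys v" using xs ys path_iff by metis
  ultimately show "u \<noteq> v \<and> (\<exists>ys. rtrancl_path (arc n L c) u ys v)" by blast
next
  assume a: "u \<noteq> v \<and> (\<exists>ys. rtrancl_path (arc n L c) u ys v)"
  then obtain ys where "rtrancl_path (arc n L c) u ys v" by blast
  then obtain ys' where p: "rtrancl_path (arc n L c) u ys' v" and d: "distinct (u # ys')"
    by (rule rtrancl_path_distinct)
  have "ys' \<noteq> []" using p a by (auto elim: rtrancl_path.cases)
  then show "transfer n L c u v" unfolding transfer_def
    using p d path_iff[of "arc n L c" u ys' v]
    by (intro exI[of _ "u # ys'"]) (auto, simp add: Suc_le_eq)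
qed

lemma transfer_trans:
  "transfer n L c u v \<Longrightarrow> transfer n L c v w \<Longrightarrow> u \<noteq> w \<Longrightarrow> transfer n L c u w"
  unfolding transfer_iff by (meson rtrancl_path_trans)

lemma arc_transfer: "arc n L c u v \<Longrightarrow> transfer n L c u v"
  unfolding transfer_def arc_def
  by (rule exI[of _ "[u,v]"]) (auto simp: less_Suc_eq)

lemma stab:
  "stable_alloc n m L c \<Longrightarrow> transfer n L c u v \<Longrightarrow> card (c u) \<le> card (c v) + 1"
  unfolding stable_alloc_def by fastforce

lemma covered:
  assumes Lm: "\<forall>i<n. L i \<subseteq> {..<m}"
    and X: "clean n L X" "max_usw n m L X"
    and Y: "clean n L Y" "max_usw n m L Y"
    and i: "i < n" and x: "x \<in> X i"
  shows "\<exists>j<n. x \<in> Y j"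
proof (rule ccontr)
  assume nx: "\<not> (\<exists>j<n. x \<in> Y j)"
  define Y' where "Y' = Y(i := insert x (Y i))"
  have xm: "x \<in> {..<m}" using X i x unfolding max_usw_def is_alloc_def by blast
  have xL: "x \<in> L i" using X i x unfolding clean_def by blast
  have aY: "is_alloc n m Y" using Y unfolding max_usw_def by blast
  have "is_alloc n m Y'"
    using aY xm nx unfolding is_alloc_def Y'_def by auto
  then have le: "usw n L Y' \<le> usw n L Y" using Y unfolding max_usw_def by blast
  have fin: "finite (Y i)" using aY i unfolding is_alloc_def by (meson finite_lessThan finite_subset)
  have xni: "x \<notin> Y i" using nx i by blast
  have "usw n L Y' = card (Y' i \<inter> L i) + (\<Sum>k\<in>{..<n}-{i}. card (Y' k \<inter> L k))"
    unfolding usw_def using i by (simp add: sum.remove)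
  also have "(\<Sum>k\<in>{..<n}-{i}. card (Y' k \<inter> L k)) = (\<Sum>k\<in>{..<n}-{i}. card (Y k \<inter> L k))"
    unfolding Y'_def by (rule sum.cong) auto
  also have "card (Y' i \<inter> L i) = Suc (card (Y i \<inter> L i))"
    unfolding Y'_def using xL xni fin by (simp add: Int_insert_left_if1)
  finally have "usw n L Y' = Suc (card (Y i \<inter> L i) + (\<Sum>k\<in>{..<n}-{i}. card (Y k \<inter> L k)))"
    by simp
  moreover have "usw n L Y = card (Y i \<inter> L i) + (\<Sum>k\<in>{..<n}-{i}. card (Y k \<inter> L k))"
    unfolding usw_def using i by (simp add: sum.remove)
  ultimately show False using le by simp
qed

lemma closed_sub:
  assumes Lm: "\<forall>i<n. L i \<subseteq> {..<m}"
    and X: "clean n L X" "max_usw n m L X"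
    and Y: "clean n L Y" "max_usw n m L Y"
    and E: "E \<subseteq> {..<n}"
    and cl: "\<forall>i\<in>E. \<forall>j<n. arc n L X i j \<longrightarrow> j \<in> E"
  shows "(\<Union>i\<in>E. X i) \<subseteq> (\<Union>i\<in>E. Y i)"
proof
  fix x assume "x \<in> (\<Union>i\<in>E. X i)"
  then obtain i where i: "i \<in> E" "x \<in> X i" by blast
  then obtain j where j: "j < n" "x \<in> Y j" using covered[OF Lm X Y] E by blast
  show "x \<in> (\<Union>i\<in>E. Y i)"
  proof (cases "j = i")
    case True then show ?thesis using i j by blast
  next
    case False
    have "x \<in> L j" using Y j unfolding clean_def by blast
    then have "arc n L X i j" unfolding arc_def using False i j E by auto
    then show ?thesis using cl i j by blast
  qed
qed

lemma card_U:
  assumes "is_alloc n m X" "E \<subseteq> {..<n}"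
  shows "card (\<Union>i\<in>E. X i) = (\<Sum>i\<in>E. card (X i))"
proof (rule card_UN_disjoint)
  show "finite E" using assms(2) finite_subset by blast
  show "\<forall>i\<in>E. finite (X i)" using assms unfolding is_alloc_def
    by (meson finite_lessThan finite_subset lessThan_iff subsetD)
  show "\<forall>i\<in>E. \<forall>j\<in>E. i \<noteq> j \<longrightarrow> X i \<inter> X j = {}" using assms unfolding is_alloc_def by blast
qed

lemma preserve:
  assumes Lm: "\<forall>i<n. L i \<subseteq> {..<m}"
    and S: "stable_alloc n m L chi" and S': "stable_alloc n m L chi'"
    and E: "E \<subseteq> {..<n}"
    and cl: "\<forall>i\<in>E. \<forall>j<n. arc n L chi i j \<longrightarrow> j \<in> E"
    and tin: "\<forall>i\<in>E. t \<le> card (chi i)"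
    and tout: "\<forall>i<n. i \<notin> E \<longrightarrow> card (chi i) \<le> t"
  shows "(\<Union>i\<in>E. chi' i) = (\<Union>i\<in>E. chi i)"
proof -
  have X: "clean n L chi" "max_usw n m L chi" using S unfolding stable_alloc_def by auto
  have Y: "clean n L chi'" "max_usw n m L chi'" using S' unfolding stable_alloc_def by auto
  have aX: "is_alloc n m chi" and aY: "is_alloc n m chi'" using X Y unfolding max_usw_def by auto
  define h where "h i = card (chi i)" for i
  define h' where "h' i = card (chi' i)" for i
  have sub: "(\<Union>i\<in>E. chi i) \<subseteq> (\<Union>i\<in>E. chi' i)" by (rule closed_sub[OF Lm X Y E cl])
  define Sur where "Sur = {a\<in>E. h a < h' a}"
  define C where "C = {b. b < n \<and> (\<exists>a\<in>Sur. a = b \<or> transfer n L chi' a b)}"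
  have C: "C \<subseteq> {..<n}" unfolding C_def by auto
  have SurC: "Sur \<subseteq> C" unfolding C_def Sur_def using E by auto
  have clC: "\<forall>i\<in>C. \<forall>j<n. arc n L chi' i j \<longrightarrow> j \<in> C"
  proof (intro ballI allI impI)
    fix b j assume b: "b \<in> C" and j: "j < n" and ar: "arc n L chi' b j"
    then obtain a where a: "a \<in> Sur" "a = b \<or> transfer n L chi' a b" unfolding C_def by blast
    show "j \<in> C"
    proof (cases "a = j")
      case True then show ?thesis using a SurC by blast
    next
      case False
      have "transfer n L chi' a j"
        using a ar arc_transfer transfer_trans False by metis
      then show ?thesis unfolding C_def using a j by blast
    qed
  qed
  have subC: "(\<Union>i\<in>C. chi' i) \<subseteq> (\<Union>i\<in>C. chi i)" by (rule closed_sub[OF Lm Y X C clC])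
  have finC: "finite (\<Union>i\<in>C. chi i)" using aX C unfolding is_alloc_def
    by (meson finite_UN_I finite_lessThan finite_subset lessThan_iff subsetD)
  have sC: "(\<Sum>i\<in>C. h' i) \<le> (\<Sum>i\<in>C. h i)"
    using card_mono[OF finC subC] card_U[OF aX C] card_U[OF aY C] unfolding h_def h'_def by simp
  have finE: "finite E" using E finite_subset by blast
  have finC': "finite C" using C finite_subset by blast
  show ?thesis
  proof (cases "\<exists>b\<in>C-E. h' b < h b")
    case True
    then obtain b where b: "b \<in> C" "b \<notin> E" "h' b < h b" by blast
    then obtain a where a: "a \<in> Sur" "a = b \<or> transfer n L chi' a b" unfolding C_def by blast
    have "a \<in> E" using a unfolding Sur_def by blast
    then have T: "transfer n L chi' a b" using a b by auto
    have "h b \<le> t" using tout b C unfolding h_def by blast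
    moreover have "t \<le> h a" using tin \<open>a \<in> E\<close> unfolding h_def by blast
    moreover have "h a < h' a" using a unfolding Sur_def by blast
    ultimately have "h' a \<ge> h' b + 2" using b by linarith
    then have False using S' T unfolding stable_alloc_def h'_def by blast
    then show ?thesis ..
  next
    case False
    have s1: "(\<Sum>i\<in>C-E. h i) \<le> (\<Sum>i\<in>C-E. h' i)" using False by (intro sum_mono) (auto simp: not_less)
    have s2: "(\<Sum>i\<in>E-C. h' i) \<le> (\<Sum>i\<in>E-C. h i)"
    proof (rule sum_mono)
      fix i assume "i \<in> E - C"
      then show "h' i \<le> h i" using SurC unfolding Sur_def by force
    qed
    have e1: "(\<Sum>i\<in>E. h' i) = (\<Sum>i\<in>E\<inter>C. h' i) + (\<Sum>i\<in>E-C. h' i)"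
      using finE by (simp add: sum.Int_Diff)
    have e2: "(\<Sum>i\<in>E. h i) = (\<Sum>i\<in>E\<inter>C. h i) + (\<Sum>i\<in>E-C. h i)"
      using finE by (simp add: sum.Int_Diff)
    have e3: "(\<Sum>i\<in>C. h' i) = (\<Sum>i\<in>C\<inter>E. h' i) + (\<Sum>i\<in>C-E. h' i)"
      using finC' by (simp add: sum.Int_Diff)
    have e4: "(\<Sum>i\<in>C. h i) = (\<Sum>i\<in>C\<inter>E. h i) + (\<Sum>i\<in>C-E. h i)"
      using finC' by (simp add: sum.Int_Diff)
    have ce: "C \<inter> E = E \<inter> C" by blast
    note e3 = e3[unfolded ce] and e4 = e4[unfolded ce]
    have "(\<Sum>i\<in>E. h' i) \<le> (\<Sum>i\<in>E. h i)" using e1 e2 e3 e4 s1 s2 sC by linarith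
    then have "card (\<Union>i\<in>E. chi' i) \<le> card (\<Union>i\<in>E. chi i)"
      using card_U[OF aX E] card_U[OF aY E] unfolding h_def h'_def by simp
    moreover have "finite (\<Union>i\<in>E. chi' i)" using aY E unfolding is_alloc_def
      by (meson finite_UN_I finite_lessThan finite_subset lessThan_iff subsetD)
    ultimately show ?thesis using sub card_seteq by metis
  qed
qed

theorem lemma2:
  fixes n m d :: nat and L chi chi' :: "nat \<Rightarrow> nat set"
  assumes Lm: "\<forall>i<n. L i \<subseteq> {..<m}"
    and S: "stable_alloc n m L chi"
    and S': "stable_alloc n m L chi'"
  shows "(\<forall>x\<in>R_items n L chi d. \<exists>i\<in>r_set n L chi d. x \<in> chi' i) \<and>
         (\<forall>x\<in>S_items n L chi d. \<exists>i\<in>s_set n L chi d. x \<in> chi' i)"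
proof -
  define h where "h i = card (chi i)" for i
  define T where "T u v = transfer n L chi u v" for u v
  have st: "T u v \<Longrightarrow> h u \<le> h v + 1" for u v using stab[OF S] unfolding T_def h_def by blast
  have tr: "T u v \<Longrightarrow> T v w \<Longrightarrow> u \<noteq> w \<Longrightarrow> T u w" for u v w
    unfolding T_def using transfer_trans by blast
  have at: "arc n L chi u v \<Longrightarrow> T u v" for u v unfolding T_def by (rule arc_transfer)
  have pd: "i \<in> p_set n L chi e \<longleftrightarrow> i < n \<and> h i = e \<and> (\<exists>j<n. h j + 1 = e \<and> T i j)" for i e
    unfolding p_set_def h_def T_def by blast
  have qd: "i \<in> q_set n L chi e \<longleftrightarrow> i < n \<and> h i = e \<and> (\<exists>k<n. h k = e + 1 \<and> T k i)" for i e
    unfolding q_set_def h_def T_def by blast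
  define W where "W e = {i. i < n \<and> (e + 1 \<le> h i \<or> i \<in> q_set n L chi e)}" for e
  define Z where "Z e = {i. i < n \<and> e \<le> h i \<and> i \<notin> p_set n L chi e}" for e
  have Wcl: "\<forall>i\<in>W e. \<forall>j<n. arc n L chi i j \<longrightarrow> j \<in> W e" for e
  proof (intro ballI allI impI)
    fix i j assume i: "i \<in> W e" and j: "j < n" and a: "arc n L chi i j"
    have Tij: "T i j" using at[OF a] .
    have hij: "h i \<le> h j + 1" using st[OF Tij] .
    show "j \<in> W e"
    proof (cases "e + 1 \<le> h i")
      case True
      show ?thesis
      proof (cases "e + 1 \<le> h j")
        case True then show ?thesis unfolding W_def using j by blast
      next
        case False
        then have "h i = e + 1" "h j = e" using hij \<open>e + 1 \<le> h i\<close> by auto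
        then have "j \<in> q_set n L chi e" using qd j Tij i unfolding W_def by blast
        then show ?thesis unfolding W_def using j by blast
      qed
    next
      case False
      then have "i \<in> q_set n L chi e" using i unfolding W_def by blast
      then obtain k where k: "k < n" "h k = e + 1" "T k i" "h i = e" using qd by blast
      show ?thesis
      proof (cases "k = j")
        case True then show ?thesis using k j unfolding W_def by auto
      next
        case False
        then have Tkj: "T k j" using tr k Tij by blast
        have "h k \<le> h j + 1" using st[OF Tkj] .
        then have "h j = e \<or> e + 1 \<le> h j" using k by auto
        then show ?thesis using qd k j Tkj unfolding W_def by blast
      qed
    qed
  qed
  have Zcl: "\<forall>i\<in>Z e. \<forall>j<n. arc n L chi i j \<longrightarrow> j \<in> Z e" for e
  proof (intro ballI allI impI)
    fix i j assume i: "i \<in> Z e" and j: "j < n" and a: "arc n L chi i j"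
    have Tij: "T i j" using at[OF a] .
    have hij: "h i \<le> h j + 1" using st[OF Tij] .
    have i1: "e \<le> h i" "i \<notin> p_set n L chi e" "i < n" using i unfolding Z_def by auto
    have "e \<le> h j"
    proof (rule ccontr)
      assume "\<not> e \<le> h j"
      then have "h i = e" "h j + 1 = e" using hij i1 by auto
      then have "i \<in> p_set n L chi e" using pd i1 j Tij by blast
      then show False using i1 by blast
    qed
    moreover have "j \<notin> p_set n L chi e"
    proof
      assume "j \<in> p_set n L chi e"
      then obtain k where k: "k < n" "h k + 1 = e" "T j k" "h j = e" using pd by blast
      have "i \<noteq> k" using k i1 by auto
      then have Tik: "T i k" using tr Tij k by blast
      have "h i \<le> h k + 1" using st[OF Tik] .
      then have "h i = e" using k i1 by auto
      then have "i \<in> p_set n L chi e" using pd i1 k Tik by blast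
      then show False using i1 by blast
    qed
    ultimately show "j \<in> Z e" unfolding Z_def using j by blast
  qed
  have Wp: "(\<Union>i\<in>W e. chi' i) = (\<Union>i\<in>W e. chi i)" for e
  proof (rule preserve[OF Lm S S' _ Wcl, of _ e])
    show "W e \<subseteq> {..<n}" unfolding W_def by auto
    show "\<forall>i\<in>W e. e \<le> card (chi i)" using qd unfolding W_def h_def by force
    show "\<forall>i<n. i \<notin> W e \<longrightarrow> card (chi i) \<le> e" unfolding W_def h_def by auto
  qed
  have Zp: "(\<Union>i\<in>Z e. chi' i) = (\<Union>i\<in>Z e. chi i)" for e
  proof (rule preserve[OF Lm S S' _ Zcl, of _ e])
    show "Z e \<subseteq> {..<n}" unfolding Z_def by auto
    show "\<forall>i\<in>Z e. e \<le> card (chi i)" unfolding Z_def h_def by auto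
    show "\<forall>i<n. i \<notin> Z e \<longrightarrow> card (chi i) \<le> e" using pd unfolding Z_def h_def by force
  qed
  have aX: "is_alloc n m chi" using S unfolding stable_alloc_def max_usw_def by blast
  have diff: "\<exists>j\<in>E1 - E2. x \<in> chi' j"
    if e1: "(\<Union>i\<in>E1. chi' i) = (\<Union>i\<in>E1. chi i)" and e2: "(\<Union>i\<in>E2. chi' i) = (\<Union>i\<in>E2. chi i)"
      and E2: "E2 \<subseteq> {..<n}" and i: "i \<in> E1" "i \<notin> E2" "i < n" and x: "x \<in> chi i"
    for E1 E2 x i
  proof -
    obtain j where j: "j \<in> E1" "x \<in> chi' j" using e1 i x by blast
    have "j \<notin> E2"
    proof
      assume "j \<in> E2"
      then obtain k where k: "k \<in> E2" "x \<in> chi k" using e2 j by blast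
      then have "k \<noteq> i" "k < n" using i E2 by auto
      then show False using aX k x i unfolding is_alloc_def by blast
    qed
    then show ?thesis using j by blast
  qed
  have rs: "r_set n L chi d = Z d - W d"
    unfolding r_set_def Z_def W_def using pd qd by (auto simp: h_def)
  have part1: "\<forall>x\<in>R_items n L chi d. \<exists>i\<in>r_set n L chi d. x \<in> chi' i"
  proof
    fix x assume "x \<in> R_items n L chi d"
    then obtain i where i: "i \<in> r_set n L chi d" "x \<in> chi i" unfolding R_items_def by blast
    have "W d \<subseteq> {..<n}" unfolding W_def by auto
    then show "\<exists>i\<in>r_set n L chi d. x \<in> chi' i"
      using diff[OF Zp[of d] Wp[of d], of i x] i rs by (auto simp: Z_def)
  qed
  have part2: "\<forall>x\<in>S_items n L chi d. \<exists>i\<in>s_set n L chi d. x \<in> chi' i"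
  proof (cases "d = 0")
    case True
    have "p_set n L chi 0 = {}" unfolding p_set_def by auto
    then show ?thesis using True unfolding S_items_def s_set_def by auto
  next
    case False
    have ss: "s_set n L chi d = W (d - 1) - Z d"
      unfolding s_set_def Z_def W_def using pd qd False by (auto simp: h_def)
    show ?thesis
    proof
      fix x assume "x \<in> S_items n L chi d"
      then obtain i where i: "i \<in> s_set n L chi d" "x \<in> chi i" unfolding S_items_def by blast
      have "Z d \<subseteq> {..<n}" unfolding Z_def by auto
      moreover have "i < n" using i(1) unfolding s_set_def p_set_def q_set_def by (auto split: if_splits)
      ultimately show "\<exists>i\<in>s_set n L chi d. x \<in> chi' i"
        using diff[OF Wp[of "d - 1"] Zp[of d], of i x] i ss by auto
    qed
  qed
  show ?thesis using part1 part2 by blast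
qed
end
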